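(* Let $k\ge2$ and let $C$ be the balanced double $A_{2k+1}$-curve. For every $m\ge2$ the multiplication map $\operatorname{Sym}^m\mathrm{H}^0(C,\omega_C)\to\mathrm{H}^0(C,\omega_C^m)$ is surjective, and $h^0(C,\omega_C^m)=(2m-1)(2k-1)$.
   Context: Let $C_0,C_1,C_2$ be three copies of $\mathbb{P}^1$ with coordinate $u_i$ at $0$ and $v_i=1/u_i$ at $\infty$. The balanced double $A_{2k+1}$-curve $C$ (arithmetic genus $2k$) is obtained by gluing $C_0\setminus\{0\}$ and $C_1\setminus\{\infty\}$ into $\operatorname{Spec}$ of the subring of $\mathbb{C}[v_0]\times\mathbb{C}[u_1]$ generated by $(v_0,u_1)$ and $(v_0^{k+1},-u_1^{k+1})$, and $C_1\setminus\{0\}$ and $C_2\setminus\{\infty\}$ into $\operatorname{Spec}$ of the subring of $\mathbb{C}[v_1]\times\mathbb{C}[u_2]$ generated by $(v_1,u_2)$ and $(v_1^{k+1},-u_2^{k+1})$; $\omega_C$ is its dualizing sheaf. *)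

theory Defs
  imports Complex_Main "HOL-Library.Function_Algebras" "HOL-Library.Product_Plus"
begin

text \<open>A Laurent polynomial in one variable over the complex numbers is represented
by its coefficient function (coefficient of the n-th power), with finite support.\<close>

type_synonym lpoly = "int \<Rightarrow> complex"

definition is_lpoly :: "lpoly \<Rightarrow> bool" where
  "is_lpoly f \<longleftrightarrow> finite {n. f n \<noteq> 0}"

definition lmul :: "lpoly \<Rightarrow> lpoly \<Rightarrow> lpoly" where
  "lmul f g = (\<lambda>n. \<Sum>i\<in>{i. f i \<noteq> 0}. f i * g (n - i))"

definition lone :: lpoly where "lone = (\<lambda>n. if n = 0 then 1 else 0)"

definition lconst :: "complex \<Rightarrow> lpoly" where "lconst c = (\<lambda>n. if n = 0 then c else 0)"

definition lX :: "nat \<Rightarrow> lpoly" where "lX j = (\<lambda>n. if n = int j then 1 else 0)"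

text \<open>Residue of the meromorphic differential f(t) dt at t = 0.\<close>
definition lres :: "lpoly \<Rightarrow> complex" where "lres f = f (-1)"

text \<open>An m-differential g(u) du^m on a copy of P^1, written in the coordinate v = 1/u
at infinity: g(1/v) (-1)^m v^(-2m) dv^m.\<close>
definition at_inf :: "nat \<Rightarrow> lpoly \<Rightarrow> lpoly" where
  "at_inf m g = (\<lambda>n. (-1) ^ m * g (- n - 2 * int m))"

text \<open>Pairs of germs on the two branches through a singular point.\<close>
definition pmul :: "lpoly \<times> lpoly \<Rightarrow> lpoly \<times> lpoly \<Rightarrow> lpoly \<times> lpoly" where
  "pmul x y = (lmul (fst x) (fst y), lmul (snd x) (snd y))"

text \<open>The coordinate ring of the affine neighbourhood of a singular point: the
subring (C-subalgebra) of C[v] x C[u] generated by (v,u) and (v^(k+1), -u^(k+1)).\<close>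
inductive_set sing_ring :: "nat \<Rightarrow> (lpoly \<times> lpoly) set" for k :: nat where
  const: "(lconst c, lconst c) \<in> sing_ring k"
| gen1: "(lX 1, lX 1) \<in> sing_ring k"
| gen2: "(lX (k + 1), - lX (k + 1)) \<in> sing_ring k"
| add: "x \<in> sing_ring k \<Longrightarrow> y \<in> sing_ring k \<Longrightarrow> x + y \<in> sing_ring k"
| mul: "x \<in> sing_ring k \<Longrightarrow> y \<in> sing_ring k \<Longrightarrow> pmul x y \<in> sing_ring k"

text \<open>Sections of the dualizing sheaf over that affine neighbourhood (Rosenlicht):
pairs of meromorphic differentials (a(v) dv, b(u) du), regular away from the
singular point, such that res(f a dv) + res(g b du) = 0 for every (f,g) in the ring.\<close>
definition sing_omega :: "nat \<Rightarrow> (lpoly \<times> lpoly) set" where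
  "sing_omega k = {(a, b). is_lpoly a \<and> is_lpoly b \<and>
      (\<forall>(f, g) \<in> sing_ring k. lres (lmul f a) + lres (lmul g b) = 0)}"

definition pprod :: "(lpoly \<times> lpoly) list \<Rightarrow> lpoly \<times> lpoly" where
  "pprod xs = foldr pmul xs (lone, lone)"

text \<open>Sections of the m-th power of the dualizing sheaf over that neighbourhood: the
module over the ring generated by products of m sections of the dualizing sheaf.\<close>
inductive_set sing_omega_pow :: "nat \<Rightarrow> nat \<Rightarrow> (lpoly \<times> lpoly) set" for k m :: nat where
  zero: "0 \<in> sing_omega_pow k m"
| add: "x \<in> sing_omega_pow k m \<Longrightarrow> y \<in> sing_omega_pow k m \<Longrightarrow> x + y \<in> sing_omega_pow k m"
| gen: "r \<in> sing_ring k \<Longrightarrow> length xs = m \<Longrightarrow> set xs \<subseteq> sing_omega k \<Longrightarrow>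
         pmul r (pprod xs) \<in> sing_omega_pow k m"

text \<open>Global sections H^0(C, omega_C^m): triples (g_0(u_0) du_0^m, g_1(u_1) du_1^m,
g_2(u_2) du_2^m) of rational m-differentials on C_0, C_1, C_2, regular away from the
glued points (hence Laurent polynomials), regular at the smooth points 0 of C_0 and
infinity of C_2, and lying in omega^m near the two singular points
(v_0 = 0 ~ u_1 = 0 and v_1 = 0 ~ u_2 = 0).\<close>
definition H0_omega_pow :: "nat \<Rightarrow> nat \<Rightarrow> (lpoly \<times> lpoly \<times> lpoly) set" where
  "H0_omega_pow k m = {(g0, g1, g2).
      is_lpoly g0 \<and> is_lpoly g1 \<and> is_lpoly g2 \<and>
      (\<forall>n<0. g0 n = 0) \<and> (\<forall>n<0. at_inf m g2 n = 0) \<and>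
      (at_inf m g0, g1) \<in> sing_omega_pow k m \<and>
      (at_inf m g1, g2) \<in> sing_omega_pow k m}"

definition tmul :: "lpoly \<times> lpoly \<times> lpoly \<Rightarrow> lpoly \<times> lpoly \<times> lpoly \<Rightarrow> lpoly \<times> lpoly \<times> lpoly" where
  "tmul x y = (case x of (a0, a1, a2) \<Rightarrow> case y of (b0, b1, b2) \<Rightarrow>
      (lmul a0 b0, lmul a1 b1, lmul a2 b2))"

definition tprod :: "(lpoly \<times> lpoly \<times> lpoly) list \<Rightarrow> lpoly \<times> lpoly \<times> lpoly" where
  "tprod xs = foldr tmul xs (lone, lone, lone)"

definition tscale :: "complex \<Rightarrow> lpoly \<times> lpoly \<times> lpoly \<Rightarrow> lpoly \<times> lpoly \<times> lpoly" where
  "tscale c x = (case x of (a0, a1, a2) \<Rightarrow>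
      ((\<lambda>n. c * a0 n), (\<lambda>n. c * a1 n), (\<lambda>n. c * a2 n)))"

text \<open>Image of Sym^m H^0(omega) in H^0(omega^m): products of m global sections.\<close>
definition mult_image :: "nat \<Rightarrow> nat \<Rightarrow> (lpoly \<times> lpoly \<times> lpoly) set" where
  "mult_image k m = {tprod xs | xs. length xs = m \<and> set xs \<subseteq> H0_omega_pow k 1}"

end

theory Submission
  imports Defs
begin


definition dl :: "int \<Rightarrow> lpoly" where "dl e = (\<lambda>n. if n = e then 1 else 0)"

lemma is_lpoly_point[simp]: "is_lpoly (\<lambda>n. if n = e then c else 0)"
  unfolding is_lpoly_def by (rule finite_subset[of _ "{e}"]) auto

lemma is_lpoly_dl[simp]: "is_lpoly (dl e)" unfolding dl_def by simp
lemma is_lpoly_0[simp]: "is_lpoly 0" unfolding is_lpoly_def by simp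
lemma is_lpoly_add: "is_lpoly f \<Longrightarrow> is_lpoly g \<Longrightarrow> is_lpoly (f + g)"
  unfolding is_lpoly_def by (rule finite_subset[of _ "{n. f n \<noteq> 0} \<union> {n. g n \<noteq> 0}"]) auto
lemma is_lpoly_scale: "is_lpoly f \<Longrightarrow> is_lpoly (\<lambda>n. c * f n)"
  unfolding is_lpoly_def by (rule finite_subset[of _ "{n. f n \<noteq> 0}"]) auto
lemma is_lpoly_uminus: "is_lpoly f \<Longrightarrow> is_lpoly (- f)"
  unfolding is_lpoly_def by simp
lemma is_lpoly_lone[simp]: "is_lpoly lone" unfolding lone_def by simp

lemma lmul_eq_sum:
  assumes "is_lpoly f" "finite S" "\<And>i. f i \<noteq> 0 \<Longrightarrow> g (n - i) \<noteq> 0 \<Longrightarrow> i \<in> S"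
  shows "lmul f g n = (\<Sum>i\<in>S. f i * g (n - i))"
proof -
  have "lmul f g n = (\<Sum>i\<in>{i. f i \<noteq> 0} \<inter> S. f i * g (n - i))"
    unfolding lmul_def using assms(1,3) unfolding is_lpoly_def
    by (intro sum.mono_neutral_right) auto
  also have "\<dots> = (\<Sum>i\<in>S. f i * g (n - i))"
    using assms(2) by (intro sum.mono_neutral_left) auto
  finally show ?thesis .
qed

lemma lmul_point: "lmul (\<lambda>n. if n = e then c else 0) g = (\<lambda>n. c * g (n - e))"
proof
  fix n
  show "lmul (\<lambda>n. if n = e then c else 0) g n = c * g (n - e)"
    by (subst lmul_eq_sum[where S="{e}"]) (auto split: if_splits)
qed

lemma lmul_dl: "lmul (dl e) g = (\<lambda>n. g (n - e))"
  unfolding dl_def lmul_point by simp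

lemma lmul_zero_left[simp]: "lmul 0 g = 0"
  unfolding lmul_def by (auto simp: fun_eq_iff)

lemma lmul_zero_right[simp]: "lmul f 0 = 0"
  unfolding lmul_def by (auto simp: fun_eq_iff)

lemma lmul_lone_left[simp]: "lmul lone g = g"
  unfolding lone_def lmul_point by simp

lemma lmul_lone_right: "is_lpoly f \<Longrightarrow> lmul f lone = f"
proof
  fix n assume "is_lpoly f"
  show "lmul f lone n = f n"
    by (subst lmul_eq_sum[where S="{n}"]) (use \<open>is_lpoly f\<close> in \<open>auto simp: lone_def split: if_splits\<close>)
qed

lemma is_lpoly_lmul:
  assumes "is_lpoly f" "is_lpoly g" shows "is_lpoly (lmul f g)"
proof -
  have "{n. lmul f g n \<noteq> 0} \<subseteq> (\<lambda>(i,j). i + j) ` ({i. f i \<noteq> 0} \<times> {j. g j \<noteq> 0})"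
  proof
    fix n assume "n \<in> {n. lmul f g n \<noteq> 0}"
    then have "(\<Sum>i\<in>{i. f i \<noteq> 0}. f i * g (n - i)) \<noteq> 0" unfolding lmul_def by simp
    then obtain i where "i \<in> {i. f i \<noteq> 0}" "f i * g (n - i) \<noteq> 0"
      by (rule sum.not_neutral_contains_not_neutral)
    then have "f i \<noteq> 0" "g (n - i) \<noteq> 0" by auto
    then show "n \<in> (\<lambda>(i,j). i + j) ` ({i. f i \<noteq> 0} \<times> {j. g j \<noteq> 0})"
      by (intro image_eqI[of _ _ "(i, n - i)"]) auto
  qed
  moreover have "finite ((\<lambda>(i,j). i + j) ` ({i. f i \<noteq> 0} \<times> {j. g j \<noteq> 0}))"
    using assms unfolding is_lpoly_def by (intro finite_imageI finite_cartesian_product)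
  ultimately show ?thesis unfolding is_lpoly_def by (rule finite_subset)
qed


definition Cp :: "nat \<Rightarrow> int \<Rightarrow> complex \<Rightarrow> lpoly \<times> lpoly \<Rightarrow> bool" where
  "Cp k d s x \<longleftrightarrow> is_lpoly (fst x) \<and> is_lpoly (snd x) \<and>
     (\<forall>n. n < - d \<longrightarrow> fst x n = 0 \<and> snd x n = 0) \<and>
     (\<forall>n. n \<le> int k - d \<longrightarrow> fst x n = s * snd x n)"

lemma Cp_mul:
  assumes A: "Cp k d1 s1 (a, b)" and B: "Cp k d2 s2 (a', b')"
  shows "Cp k (d1 + d2) (s1 * s2) (lmul a a', lmul b b')"
proof -
  have fa: "is_lpoly a" "is_lpoly b" "is_lpoly a'" "is_lpoly b'" using A B by (auto simp: Cp_def)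
  have za: "\<And>n. n < -d1 \<Longrightarrow> a n = 0" "\<And>n. n < -d1 \<Longrightarrow> b n = 0"
   and za': "\<And>n. n < -d2 \<Longrightarrow> a' n = 0" "\<And>n. n < -d2 \<Longrightarrow> b' n = 0"
    using A B by (auto simp: Cp_def)
  have wa: "\<And>n. n \<le> int k - d1 \<Longrightarrow> a n = s1 * b n"
   and wa': "\<And>n. n \<le> int k - d2 \<Longrightarrow> a' n = s2 * b' n"
    using A B by (auto simp: Cp_def)
  have low: "lmul a a' n = 0 \<and> lmul b b' n = 0" if "n < - (d1 + d2)" for n
  proof -
    have "lmul a a' n = (\<Sum>i\<in>{}. a i * a' (n - i))"
      by (rule lmul_eq_sum[OF fa(1)]) (use that za za' in \<open>force+\<close>)
    moreover have "lmul b b' n = (\<Sum>i\<in>{}. b i * b' (n - i))"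
      by (rule lmul_eq_sum[OF fa(2)]) (use that za za' in \<open>force+\<close>)
    ultimately show ?thesis by simp
  qed
  have win: "lmul a a' n = (s1 * s2) * lmul b b' n" if "n \<le> int k - (d1 + d2)" for n
  proof -
    have "lmul a a' n = (\<Sum>i\<in>{-d1..n+d2}. a i * a' (n - i))"
      by (rule lmul_eq_sum[OF fa(1)]) (use za za' in \<open>force+\<close>)
    also have "\<dots> = (\<Sum>i\<in>{-d1..n+d2}. (s1 * s2) * (b i * b' (n - i)))"
      by (intro sum.cong refl) (use that wa wa' in auto)
    also have "\<dots> = (s1 * s2) * (\<Sum>i\<in>{-d1..n+d2}. b i * b' (n - i))"
      by (simp add: sum_distrib_left)
    also have "(\<Sum>i\<in>{-d1..n+d2}. b i * b' (n - i)) = lmul b b' n"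
      by (rule lmul_eq_sum[OF fa(2), symmetric]) (use za za' in \<open>force+\<close>)
    finally show ?thesis .
  qed
  show ?thesis unfolding Cp_def using low win fa by (auto intro: is_lpoly_lmul)
qed

lemma Cp_add:
  assumes "Cp k d s x" "Cp k d s y" shows "Cp k d s (x + y)"
  using assms unfolding Cp_def by (auto intro: is_lpoly_add simp: distrib_left)

lemma Cp_zero: "Cp k d s 0"
  unfolding Cp_def by (simp add: zero_prod_def)

lemma ring_Cp: "x \<in> sing_ring k \<Longrightarrow> Cp k 0 1 x"
proof (induction rule: sing_ring.induct)
  case (const c)
  then show ?case unfolding Cp_def lconst_def by simp
next
  case gen1
  then show ?case unfolding Cp_def lX_def by simp
next
  case gen2
  then show ?case unfolding Cp_def lX_def by (auto intro: is_lpoly_uminus)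
next
  case (add x y)
  then show ?case by (simp add: Cp_add)
next
  case (mul x y)
  then show ?case using Cp_mul[of k 0 1 "fst x" "snd x" 0 1 "fst y" "snd y"]
    by (simp add: pmul_def)
qed


lemma lX_dl: "lX j = dl (int j)" unfolding lX_def dl_def by simp

lemma neg_lX: "- lX j = (\<lambda>n. if n = int j then -1 else 0)"
  unfolding lX_def by (auto simp: fun_eq_iff)

lemma ring_pow: "(lX j, lX j) \<in> sing_ring k"
proof (induction j)
  case 0
  have "(lconst 1, lconst 1) \<in> sing_ring k" by (rule sing_ring.const)
  moreover have "lconst 1 = lX 0" unfolding lconst_def lX_def by simp
  ultimately show ?case by simp
next
  case (Suc j)
  have "pmul (lX 1, lX 1) (lX j, lX j) \<in> sing_ring k"
    by (rule sing_ring.mul[OF sing_ring.gen1 Suc])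
  moreover have "lmul (lX 1) (lX j) = lX (Suc j)"
    unfolding lX_dl lmul_dl by (auto simp: dl_def fun_eq_iff)
  ultimately show ?case by (simp add: pmul_def)
qed

lemma ring_pow2: "j \<ge> k + 1 \<Longrightarrow> (lX j, - lX j) \<in> sing_ring k"
proof -
  assume j: "j \<ge> k + 1"
  have "pmul (lX (k+1), - lX (k+1)) (lX (j - (k+1)), lX (j - (k+1))) \<in> sing_ring k"
    by (rule sing_ring.mul[OF sing_ring.gen2 ring_pow])
  moreover have "lmul (lX (k+1)) (lX (j - (k+1))) = lX j"
    unfolding lX_dl lmul_dl using j by (auto simp: dl_def fun_eq_iff)
  moreover have "lmul (- lX (k+1)) (lX (j - (k+1))) = - lX j"
    unfolding neg_lX lmul_point using j by (auto simp: lX_def fun_eq_iff)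
  ultimately show ?thesis by (simp add: pmul_def)
qed

lemma lres_lX: "lres (lmul (lX j) a) = a (-1 - int j)"
  unfolding lres_def lX_dl lmul_dl by simp

lemma lres_neg_lX: "lres (lmul (- lX j) a) = - a (-1 - int j)"
  unfolding lres_def neg_lX lmul_point by simp

lemma omega_Cp:
  assumes "x \<in> sing_omega k" shows "Cp k (int k + 1) (-1) x"
proof -
  obtain a b where x: "x = (a, b)" by fastforce
  have fa: "is_lpoly a" "is_lpoly b"
   and res: "\<And>f g. (f, g) \<in> sing_ring k \<Longrightarrow> lres (lmul f a) + lres (lmul g b) = 0"
    using assms x unfolding sing_omega_def by auto
  have e1: "a (-1 - int j) + b (-1 - int j) = 0" for j
    using res[OF ring_pow[of j]] by (simp add: lres_lX)
  have e2: "a (-1 - int j) - b (-1 - int j) = 0" if "j \<ge> k + 1" for j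
    using res[OF ring_pow2[OF that]] by (simp add: lres_lX lres_neg_lX)
  have low: "a n = 0 \<and> b n = 0" if "n < - (int k + 1)" for n
  proof -
    define j where "j = nat (-1 - n)"
    have j: "j \<ge> k + 1" "-1 - int j = n" using that unfolding j_def by auto
    show ?thesis using e1[of j] e2[OF j(1)] j(2) by (simp add: algebra_simps)
  qed
  have win: "a n = - b n" if "n \<le> int k - (int k + 1)" for n
  proof -
    define j where "j = nat (-1 - n)"
    have j: "-1 - int j = n" using that unfolding j_def by auto
    show ?thesis using e1[of j] j by (simp add: eq_neg_iff_add_eq_0)
  qed
  show ?thesis unfolding Cp_def x using fa low win by auto
qed

lemma Cp_omega:
  assumes "Cp k (int k + 1) (-1) x" shows "x \<in> sing_omega k"
proof -
  obtain a b where x: "x = (a, b)" by fastforce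
  have fa: "is_lpoly a" "is_lpoly b" using assms x unfolding Cp_def by auto
  have za: "\<And>n. n < - (int k + 1) \<Longrightarrow> a n = 0 \<and> b n = 0"
   and wa: "\<And>n. n \<le> -1 \<Longrightarrow> a n = - b n"
    using assms x unfolding Cp_def by auto
  have "lres (lmul f a) + lres (lmul g b) = 0" if fg: "(f, g) \<in> sing_ring k" for f g
  proof -
    have C: "Cp k 0 1 (f, g)" by (rule ring_Cp[OF fg])
    have ff: "is_lpoly f" "is_lpoly g" and zf: "\<And>n. n < 0 \<Longrightarrow> f n = 0 \<and> g n = 0"
      and wf: "\<And>n. n \<le> int k \<Longrightarrow> f n = g n"
      using C unfolding Cp_def by auto
    have "lres (lmul f a) = (\<Sum>i\<in>{0..int k}. f i * a (-1 - i))"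
      unfolding lres_def by (rule lmul_eq_sum[OF ff(1)]) (use zf za in \<open>force+\<close>)
    moreover have "lres (lmul g b) = (\<Sum>i\<in>{0..int k}. g i * b (-1 - i))"
      unfolding lres_def by (rule lmul_eq_sum[OF ff(2)]) (use zf za in \<open>force+\<close>)
    moreover have "(\<Sum>i\<in>{0..int k}. f i * a (-1 - i)) = - (\<Sum>i\<in>{0..int k}. g i * b (-1 - i))"
      unfolding sum_negf[symmetric] by (intro sum.cong refl) (auto simp: wf wa)
    ultimately show ?thesis by simp
  qed
  then show ?thesis unfolding sing_omega_def x using fa by auto
qed


lemma pmul_Cp:
  assumes "Cp k d1 s1 x" "Cp k d2 s2 y" shows "Cp k (d1 + d2) (s1 * s2) (pmul x y)"
  using Cp_mul[of k d1 s1 "fst x" "snd x" d2 s2 "fst y" "snd y"] assms by (simp add: pmul_def)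

lemma pprod_Cp:
  "set xs \<subseteq> sing_omega k \<Longrightarrow> Cp k (int (length xs) * (int k + 1)) ((-1) ^ length xs) (pprod xs)"
proof (induction xs)
  case Nil
  then show ?case unfolding pprod_def Cp_def lone_def by auto
next
  case (Cons x xs)
  have "Cp k ((int k + 1) + int (length xs) * (int k + 1)) ((-1) * (-1) ^ length xs) (pmul x (pprod xs))"
    by (rule pmul_Cp) (use Cons omega_Cp in auto)
  then show ?case unfolding pprod_def by (simp add: algebra_simps)
qed

lemma omega_pow_Cp:
  "x \<in> sing_omega_pow k m \<Longrightarrow> Cp k (int m * (int k + 1)) ((-1) ^ m) x"
proof (induction rule: sing_omega_pow.induct)
  case zero
  then show ?case by (rule Cp_zero)
next
  case (add x y)
  then show ?case by (simp add: Cp_add)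
next
  case (gen r xs)
  have "Cp k (0 + int (length xs) * (int k + 1)) (1 * (-1) ^ length xs) (pmul r (pprod xs))"
    by (rule pmul_Cp[OF ring_Cp[OF gen(1)] pprod_Cp[OF gen(3)]])
  then show ?case using gen(2) by simp
qed

lemma lconst1: "lconst 1 = lone" unfolding lconst_def lone_def by simp

lemma Cp_omega_pow1:
  assumes "Cp k (int k + 1) (-1) x" shows "x \<in> sing_omega_pow k 1"
proof -
  have "pmul (lconst 1, lconst 1) (pprod [x]) \<in> sing_omega_pow k 1"
    by (rule sing_omega_pow.gen[OF sing_ring.const]) (use Cp_omega[OF assms] in auto)
  moreover have "pmul (lconst 1, lconst 1) (pprod [x]) = x"
    using assms unfolding Cp_def pprod_def pmul_def lconst1
    by (cases x) (simp add: lmul_lone_right)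
  ultimately show ?thesis by simp
qed

lemma omega_pow1_omega: "x \<in> sing_omega_pow k 1 \<Longrightarrow> x \<in> sing_omega k"
  using omega_pow_Cp[of x k 1] Cp_omega by simp


lemma is_lpoly_at_inf: "is_lpoly f \<Longrightarrow> is_lpoly (at_inf a f)"
  unfolding is_lpoly_def at_inf_def
  by (rule finite_subset[of _ "(\<lambda>j. - j - 2 * int a) ` {n. f n \<noteq> 0}"])
     (auto intro!: image_eqI[where x="- _ - 2 * int a"])

lemma at_inf_lmul:
  assumes f: "is_lpoly f" and g: "is_lpoly g"
  shows "lmul (at_inf a f) (at_inf b g) = at_inf (a + b) (lmul f g)"
proof
  fix n
  let ?S = "{j. f j \<noteq> 0}"
  have fin: "finite ?S" using f unfolding is_lpoly_def .
  have "lmul (at_inf a f) (at_inf b g) n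
      = (\<Sum>i\<in>(\<lambda>j. - j - 2 * int a) ` ?S. at_inf a f i * at_inf b g (n - i))"
    by (rule lmul_eq_sum[OF is_lpoly_at_inf[OF f]])
       (use fin in \<open>auto simp: at_inf_def intro!: image_eqI[where x="- _ - 2 * int a"]\<close>)
  also have "\<dots> = (\<Sum>j\<in>?S. at_inf a f (- j - 2 * int a) * at_inf b g (n + j + 2 * int a))"
    by (subst sum.reindex) (auto simp: inj_on_def algebra_simps)
  also have "\<dots> = (\<Sum>j\<in>?S. (-1) ^ (a + b) * (f j * g (- n - 2 * int (a + b) - j)))"
    by (intro sum.cong refl) (simp add: at_inf_def power_add algebra_simps; rule arg_cong[where f=g]; simp)
  also have "\<dots> = at_inf (a + b) (lmul f g) n"
    unfolding at_inf_def lmul_def by (simp add: sum_distrib_left)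
  finally show "lmul (at_inf a f) (at_inf b g) n = at_inf (a + b) (lmul f g) n" .
qed

lemma at_inf_lone: "at_inf 0 lone = lone"
  unfolding at_inf_def lone_def by auto

lemma tprod_props:
  assumes "set xs \<subseteq> H0_omega_pow k 1"
  shows "is_lpoly (fst (tprod xs)) \<and> is_lpoly (fst (snd (tprod xs))) \<and> is_lpoly (snd (snd (tprod xs)))
    \<and> Cp k 0 1 (fst (tprod xs), fst (tprod xs))
    \<and> Cp k 0 1 (at_inf (length xs) (snd (snd (tprod xs))), at_inf (length xs) (snd (snd (tprod xs))))
    \<and> (at_inf (length xs) (fst (tprod xs)), fst (snd (tprod xs))) = pprod (map (\<lambda>(a,b,c). (at_inf 1 a, b)) xs)
    \<and> (at_inf (length xs) (fst (snd (tprod xs))), snd (snd (tprod xs))) = pprod (map (\<lambda>(a,b,c). (at_inf 1 b, c)) xs)"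
  using assms
proof (induction xs)
  case Nil
  then show ?case unfolding tprod_def pprod_def Cp_def
    by (auto simp: at_inf_lone) (auto simp: lone_def)
next
  case (Cons x xs)
  obtain a b c where x: "x = (a, b, c)" by (cases x) auto
  have xH: "(a, b, c) \<in> H0_omega_pow k 1" using Cons.prems x by auto
  then have fx: "is_lpoly a" "is_lpoly b" "is_lpoly c"
    and za: "\<forall>n<0. a n = 0" and zc: "\<forall>n<0. at_inf 1 c n = 0"
    unfolding H0_omega_pow_def by auto
  have Ca: "Cp k 0 1 (a, a)" using fx za unfolding Cp_def by auto
  have Cc: "Cp k 0 1 (at_inf 1 c, at_inf 1 c)" using fx zc is_lpoly_at_inf unfolding Cp_def by auto
  obtain A B C where T: "tprod xs = (A, B, C)" by (cases "tprod xs") auto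
  have IH: "is_lpoly A" "is_lpoly B" "is_lpoly C" "Cp k 0 1 (A, A)"
     "Cp k 0 1 (at_inf (length xs) C, at_inf (length xs) C)"
     "(at_inf (length xs) A, B) = pprod (map (\<lambda>(a,b,c). (at_inf 1 a, b)) xs)"
     "(at_inf (length xs) B, C) = pprod (map (\<lambda>(a,b,c). (at_inf 1 b, c)) xs)"
    using Cons T by auto
  have tp: "tprod (x # xs) = (lmul a A, lmul b B, lmul c C)"
    unfolding x tprod_def using T unfolding tprod_def tmul_def by simp
  have m1: "lmul (at_inf 1 a) (at_inf (length xs) A) = at_inf (length (x # xs)) (lmul a A)"
    using at_inf_lmul[OF fx(1) IH(1), of 1 "length xs"] by simp
  have m2: "lmul (at_inf 1 b) (at_inf (length xs) B) = at_inf (length (x # xs)) (lmul b B)"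
    using at_inf_lmul[OF fx(2) IH(2), of 1 "length xs"] by simp
  have m3: "lmul (at_inf 1 c) (at_inf (length xs) C) = at_inf (length (x # xs)) (lmul c C)"
    using at_inf_lmul[OF fx(3) IH(3), of 1 "length xs"] by simp
  have c1: "Cp k 0 1 (lmul a A, lmul a A)" using Cp_mul[OF Ca IH(4)] by simp
  have c2: "Cp k 0 1 (at_inf (length (x # xs)) (lmul c C), at_inf (length (x # xs)) (lmul c C))"
    using Cp_mul[OF Cc IH(5)] m3 by simp
  have p1: "pprod (map (\<lambda>(a,b,c). (at_inf 1 a, b)) (x # xs)) = pmul (at_inf 1 a, b) (pprod (map (\<lambda>(a,b,c). (at_inf 1 a, b)) xs))"
    unfolding pprod_def x by simp
  have p2: "pprod (map (\<lambda>(a,b,c). (at_inf 1 b, c)) (x # xs)) = pmul (at_inf 1 b, c) (pprod (map (\<lambda>(a,b,c). (at_inf 1 b, c)) xs))"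
    unfolding pprod_def x by simp
  show ?case unfolding tp using c1 c2 p1 p2 IH(6,7)[symmetric] m1 m2 fx IH(1-3)
    by (auto simp: pmul_def intro: is_lpoly_lmul)
qed

lemma mult_image_H0:
  assumes "y \<in> mult_image k m" shows "y \<in> H0_omega_pow k m"
proof -
  obtain xs where xs: "y = tprod xs" "length xs = m" "set xs \<subseteq> H0_omega_pow k 1"
    using assms unfolding mult_image_def by auto
  note P = tprod_props[OF xs(3)]
  have o1: "set (map (\<lambda>(a,b,c). (at_inf 1 a, b)) xs) \<subseteq> sing_omega k"
  proof
    fix y assume "y \<in> set (map (\<lambda>(a,b,c). (at_inf 1 a, b)) xs)"
    then obtain a b c where abc: "(a, b, c) \<in> set xs" "y = (at_inf 1 a, b)" by auto
    then have "(a, b, c) \<in> H0_omega_pow k 1" using xs(3) by auto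
    then have "(at_inf 1 a, b) \<in> sing_omega_pow k 1" unfolding H0_omega_pow_def by auto
    then show "y \<in> sing_omega k" using abc(2) omega_pow1_omega by simp
  qed
  have o2: "set (map (\<lambda>(a,b,c). (at_inf 1 b, c)) xs) \<subseteq> sing_omega k"
  proof
    fix y assume "y \<in> set (map (\<lambda>(a,b,c). (at_inf 1 b, c)) xs)"
    then obtain a b c where abc: "(a, b, c) \<in> set xs" "y = (at_inf 1 b, c)" by auto
    then have "(a, b, c) \<in> H0_omega_pow k 1" using xs(3) by auto
    then have "(at_inf 1 b, c) \<in> sing_omega_pow k 1" unfolding H0_omega_pow_def by auto
    then show "y \<in> sing_omega k" using abc(2) omega_pow1_omega by simp
  qed
  have g1: "pmul (lconst 1, lconst 1) (pprod (map (\<lambda>(a,b,c). (at_inf 1 a, b)) xs)) \<in> sing_omega_pow k m"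
    by (rule sing_omega_pow.gen[OF sing_ring.const]) (use o1 xs(2) in auto)
  have g2: "pmul (lconst 1, lconst 1) (pprod (map (\<lambda>(a,b,c). (at_inf 1 b, c)) xs)) \<in> sing_omega_pow k m"
    by (rule sing_omega_pow.gen[OF sing_ring.const]) (use o2 xs(2) in auto)
  have id: "pmul (lconst 1, lconst 1) p = p" for p unfolding pmul_def lconst1 by simp
  show ?thesis unfolding H0_omega_pow_def using P g1 g2 xs(1,2) unfolding id Cp_def
    by (cases "tprod xs") auto
qed




lemma vs_tscale: "Vector_Spaces.vector_space tscale"
  by unfold_locales (simp_all add: tscale_def split_beta fun_eq_iff algebra_simps)

interpretation tv: vector_space tscale by (rule vs_tscale)

lemma lmul_scale_left: "lmul (\<lambda>n. c * f n) g = (\<lambda>n. c * lmul f g n)"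
proof (cases "c = 0")
  case True then show ?thesis unfolding lmul_def by simp
next
  case False
  then show ?thesis unfolding lmul_def by (simp add: sum_distrib_left algebra_simps)
qed

lemma lmul_lconst: "lmul (lconst c) f = (\<lambda>n. c * f n)"
  unfolding lconst_def lmul_point by simp

definition psc :: "complex \<Rightarrow> lpoly \<times> lpoly \<Rightarrow> lpoly \<times> lpoly" where
  "psc c x = ((\<lambda>n. c * fst x n), (\<lambda>n. c * snd x n))"

lemma omega_pow_scale: "x \<in> sing_omega_pow k m \<Longrightarrow> psc c x \<in> sing_omega_pow k m"
proof (induction rule: sing_omega_pow.induct)
  case zero
  have "psc c 0 = 0" unfolding psc_def by (simp add: zero_prod_def zero_fun_def)
  then show ?case by (simp add: sing_omega_pow.zero)
next
  case (add x y)
  have "psc c (x + y) = psc c x + psc c y" unfolding psc_def by (simp add: fun_eq_iff algebra_simps)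
  then show ?case using add by (simp add: sing_omega_pow.add)
next
  case (gen r xs)
  have r': "pmul (lconst c, lconst c) r \<in> sing_ring k"
    by (rule sing_ring.mul[OF sing_ring.const gen(1)])
  have "psc c (pmul r (pprod xs)) = pmul (pmul (lconst c, lconst c) r) (pprod xs)"
    unfolding psc_def pmul_def by (simp add: lmul_lconst lmul_scale_left)
  then show ?case using sing_omega_pow.gen[OF r' gen(2,3)] by simp
qed

lemma at_inf_add: "at_inf m (f + g) = at_inf m f + at_inf m g"
  unfolding at_inf_def by (simp add: fun_eq_iff algebra_simps)
lemma at_inf_scale: "at_inf m (\<lambda>n. c * f n) = (\<lambda>n. c * at_inf m f n)"
  unfolding at_inf_def by (simp add: fun_eq_iff algebra_simps)

lemma H0_subspace: "tv.subspace (H0_omega_pow k m)"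
proof (rule tv.subspaceI)
  show "0 \<in> H0_omega_pow k m"
    unfolding H0_omega_pow_def
    using is_lpoly_0 by (simp add: zero_prod_def at_inf_def zero_fun_def sing_omega_pow.zero[unfolded zero_prod_def zero_fun_def])
next
  fix x y assume x: "x \<in> H0_omega_pow k m" and y: "y \<in> H0_omega_pow k m"
  obtain a b c where xe: "x = (a, b, c)" by (cases x) auto
  obtain a' b' c' where ye: "y = (a', b', c')" by (cases y) auto
  have s1: "(at_inf m a, b) + (at_inf m a', b') \<in> sing_omega_pow k m"
    using x y xe ye unfolding H0_omega_pow_def by (intro sing_omega_pow.add) auto
  have s2: "(at_inf m b, c) + (at_inf m b', c') \<in> sing_omega_pow k m"
    using x y xe ye unfolding H0_omega_pow_def by (intro sing_omega_pow.add) auto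
  show "x + y \<in> H0_omega_pow k m"
    using x y s1 s2 unfolding xe ye H0_omega_pow_def
    by (auto simp: at_inf_add plus_prod_def intro: is_lpoly_add)
next
  fix s x assume x: "x \<in> H0_omega_pow k m"
  obtain a b c where xe: "x = (a, b, c)" by (cases x) auto
  have s1: "psc s (at_inf m a, b) \<in> sing_omega_pow k m"
    using x xe unfolding H0_omega_pow_def by (auto intro: omega_pow_scale)
  have s2: "psc s (at_inf m b, c) \<in> sing_omega_pow k m"
    using x xe unfolding H0_omega_pow_def by (auto intro: omega_pow_scale)
  show "tscale s x \<in> H0_omega_pow k m"
    using x s1 s2 unfolding xe H0_omega_pow_def tscale_def psc_def
    by (auto simp: at_inf_scale intro: is_lpoly_scale)
qed


lemma dl_inj: "dl a = dl b \<longleftrightarrow> a = b"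
proof
  assume "dl a = dl b" then have "dl a a = dl b a" by simp
  then show "a = b" unfolding dl_def by (auto split: if_splits)
qed simp

lemma dl_nz: "dl a \<noteq> 0"
proof
  assume "dl a = 0" then have "dl a a = 0" by simp
  then show False unfolding dl_def by simp
qed

definition alp :: "int \<Rightarrow> lpoly \<times> lpoly \<times> lpoly" where "alp i = (dl i, dl (-2 - i), 0)"
definition bet :: "int \<Rightarrow> lpoly \<times> lpoly \<times> lpoly" where "bet i = (0, dl i, dl (-2 - i))"

lemma at_inf_dl: "at_inf 1 (dl i) = - dl (-2 - i)"
  unfolding at_inf_def dl_def by (auto simp: fun_eq_iff)

lemma at_inf_zero: "at_inf m 0 = 0"
  unfolding at_inf_def by (simp add: fun_eq_iff)

lemma Cp_pair1: "- int k - 1 \<le> e \<Longrightarrow> e \<le> -2 \<Longrightarrow> (at_inf 1 (dl (-2 - e)), dl e) \<in> sing_omega_pow k 1"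
  unfolding at_inf_dl by (rule Cp_omega_pow1) (auto simp: Cp_def dl_def intro: is_lpoly_uminus)

lemma Cp_pair2: "0 \<le> i \<Longrightarrow> (at_inf 1 (dl (-2 - i)), 0) \<in> sing_omega_pow k 1"
  unfolding at_inf_dl by (rule Cp_omega_pow1) (auto simp: Cp_def dl_def intro: is_lpoly_uminus)

lemma Cp_pair3: "0 \<le> i \<Longrightarrow> (at_inf 1 0, dl i) \<in> sing_omega_pow k 1"
  unfolding at_inf_zero by (rule Cp_omega_pow1) (auto simp: Cp_def dl_def)

lemma alp_H0: "0 \<le> i \<Longrightarrow> i \<le> int k - 1 \<Longrightarrow> alp i \<in> H0_omega_pow k 1"
proof -
  assume i: "0 \<le> i" "i \<le> int k - 1"
  have p1: "(at_inf 1 (dl i), dl (-2 - i)) \<in> sing_omega_pow k 1"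
    using Cp_pair1[of k "-2 - i"] i by simp
  have p2: "(at_inf 1 (dl (-2 - i)), 0) \<in> sing_omega_pow k 1" using Cp_pair2[OF i(1)] .
  have z: "\<forall>n<0. at_inf 1 0 n = 0" by (simp add: at_inf_zero)
  show ?thesis unfolding alp_def H0_omega_pow_def using p1 p2 z i by (auto simp: dl_def)
qed

lemma bet_H0: "0 \<le> i \<Longrightarrow> i \<le> int k - 1 \<Longrightarrow> bet i \<in> H0_omega_pow k 1"
proof -
  assume i: "0 \<le> i" "i \<le> int k - 1"
  have p1: "(at_inf 1 (dl i), dl (-2 - i)) \<in> sing_omega_pow k 1"
    using Cp_pair1[of k "-2 - i"] i by simp
  have p3: "(at_inf 1 0, dl i) \<in> sing_omega_pow k 1" using Cp_pair3[OF i(1)] .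
  have z: "\<forall>n<0. at_inf 1 (dl (-2 - i)) n = 0" using i by (auto simp: at_inf_def dl_def)
  show ?thesis unfolding bet_def H0_omega_pow_def using p1 p3 z i by (auto simp: dl_def)
qed

lemma alp_H0': "0 \<le> i \<Longrightarrow> i \<le> int k - 1 \<Longrightarrow> (dl i, dl (-2 - i), 0) \<in> H0_omega_pow k (Suc 0)"
  using alp_H0[of i k] unfolding alp_def by simp

lemma bet_H0': "0 \<le> i \<Longrightarrow> i \<le> int k - 1 \<Longrightarrow> (0, dl i, dl (-2 - i)) \<in> H0_omega_pow k (Suc 0)"
  using bet_H0[of i k] unfolding bet_def by simp

lemma lmul_dl_dl: "lmul (dl a) (dl b) = dl (a + b)"
  unfolding lmul_dl by (auto simp: dl_def fun_eq_iff)

lemma tprod_Cons: "tprod (x # xs) = tmul x (tprod xs)" unfolding tprod_def by simp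

lemma tprod_single: "is_lpoly a \<Longrightarrow> is_lpoly b \<Longrightarrow> is_lpoly c \<Longrightarrow> tprod [(a, b, c)] = (a, b, c)"
  unfolding tprod_def tmul_def by (simp add: lmul_lone_right)

lemma tmul_simp: "tmul (a, b, c) (a', b', c') = (lmul a a', lmul b b', lmul c c')"
  unfolding tmul_def by simp

definition Ab :: "nat \<Rightarrow> int \<Rightarrow> lpoly \<times> lpoly \<times> lpoly" where "Ab m n = (dl n, dl (-2 * int m - n), 0)"
definition Cb :: "nat \<Rightarrow> int \<Rightarrow> lpoly \<times> lpoly \<times> lpoly" where "Cb m n = (0, dl n, dl (-2 * int m - n))"
definition Mb :: "int \<Rightarrow> lpoly \<times> lpoly \<times> lpoly" where "Mb e = (0, dl e, 0)"

lemma tprod_Nil: "tprod [] = (lone, lone, lone)" unfolding tprod_def by simp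

lemma cons_prod:
  assumes "x \<in> H0_omega_pow k 1" "length xs = n" "set xs \<subseteq> H0_omega_pow k 1" "tmul x (tprod xs) = T"
  shows "\<exists>ys. length ys = Suc n \<and> set ys \<subseteq> H0_omega_pow k 1 \<and> tprod ys = T"
  using assms by (intro exI[of _ "x # xs"]) (auto simp: tprod_Cons)

lemma nil_prod: "\<exists>ys. length ys = 0 \<and> set ys \<subseteq> H0_omega_pow k 1 \<and> tprod ys = (lone, lone, lone)"
  by (intro exI[of _ "[]"]) (auto simp: tprod_Nil)

lemma tm_alp: "tmul (alp i) (dl a, dl b, 0) = (dl (i + a), dl (-2 - i + b), 0)"
  unfolding alp_def tmul_simp by (simp add: lmul_dl_dl)
lemma tm_bet: "tmul (bet i) (0, dl a, dl b) = (0, dl (i + a), dl (-2 - i + b))"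
  unfolding bet_def tmul_simp by (simp add: lmul_dl_dl)
lemma tm_alpM: "tmul (alp i) (0, dl a, 0) = (0, dl (-2 - i + a), 0)"
  unfolding alp_def tmul_simp by (simp add: lmul_dl_dl)
lemma tm_betM: "tmul (bet i) (0, dl a, 0) = (0, dl (i + a), 0)"
  unfolding bet_def tmul_simp by (simp add: lmul_dl_dl)
lemma tm_alp1: "tmul (alp i) (lone, lone, lone) = alp i"
  unfolding alp_def tmul_simp by (simp add: lmul_lone_right)
lemma tm_bet1: "tmul (bet i) (lone, lone, lone) = bet i"
  unfolding bet_def tmul_simp by (simp add: lmul_lone_right)

lemma Ab_prod:
  "0 \<le> n \<Longrightarrow> n \<le> int (Suc m') * (int k - 1) \<Longrightarrow>
   \<exists>xs. length xs = Suc m' \<and> set xs \<subseteq> H0_omega_pow k 1 \<and> tprod xs = Ab (Suc m') n"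
proof (induction m' arbitrary: n)
  case 0
  have "tmul (alp n) (lone, lone, lone) = Ab (Suc 0) n" using tm_alp1[of n] unfolding alp_def Ab_def by simp
  then show ?case using cons_prod[OF alp_H0 _ _ _, of n k "[]" 0] 0 by (auto simp: tprod_Nil)
next
  case (Suc m')
  define i where "i = min n (int k - 1)"
  have pos: "int (Suc (Suc m')) * (int k - 1) \<ge> 0" using Suc.prems by linarith
  then have k1: "int k - 1 \<ge> 0" by (simp add: zero_le_mult_iff)
  have eq: "int (Suc (Suc m')) * (int k - 1) = int (Suc m') * (int k - 1) + (int k - 1)"
    by (simp add: algebra_simps)
  have i: "0 \<le> i" "i \<le> int k - 1" "0 \<le> n - i" "n - i \<le> int (Suc m') * (int k - 1)"
    using Suc.prems k1 eq unfolding i_def by (auto simp: min_def)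
  obtain xs where xs: "length xs = Suc m'" "set xs \<subseteq> H0_omega_pow k 1" "tprod xs = Ab (Suc m') (n - i)"
    using Suc.IH[OF i(3,4)] by blast
  have "tmul (alp i) (tprod xs) = Ab (Suc (Suc m')) n"
    unfolding xs(3) Ab_def tm_alp by (simp add: dl_inj algebra_simps)
  then show ?case using cons_prod[OF alp_H0[OF i(1,2)] xs(1,2)] by simp
qed

lemma Cb_prod:
  "0 \<le> n \<Longrightarrow> n \<le> int (Suc m') * (int k - 1) \<Longrightarrow>
   \<exists>xs. length xs = Suc m' \<and> set xs \<subseteq> H0_omega_pow k 1 \<and> tprod xs = Cb (Suc m') n"
proof (induction m' arbitrary: n)
  case 0
  have "tmul (bet n) (lone, lone, lone) = Cb (Suc 0) n" using tm_bet1[of n] unfolding bet_def Cb_def by simp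
  then show ?case using cons_prod[OF bet_H0 _ _ _, of n k "[]" 0] 0 by (auto simp: tprod_Nil)
next
  case (Suc m')
  define i where "i = min n (int k - 1)"
  have pos: "int (Suc (Suc m')) * (int k - 1) \<ge> 0" using Suc.prems by linarith
  then have k1: "int k - 1 \<ge> 0" by (simp add: zero_le_mult_iff)
  have eq: "int (Suc (Suc m')) * (int k - 1) = int (Suc m') * (int k - 1) + (int k - 1)"
    by (simp add: algebra_simps)
  have i: "0 \<le> i" "i \<le> int k - 1" "0 \<le> n - i" "n - i \<le> int (Suc m') * (int k - 1)"
    using Suc.prems k1 eq unfolding i_def by (auto simp: min_def)
  obtain xs where xs: "length xs = Suc m'" "set xs \<subseteq> H0_omega_pow k 1" "tprod xs = Cb (Suc m') (n - i)"
    using Suc.IH[OF i(3,4)] by blast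
  have "tmul (bet i) (tprod xs) = Cb (Suc (Suc m')) n"
    unfolding xs(3) Cb_def tm_bet by (simp add: dl_inj algebra_simps)
  then show ?case using cons_prod[OF bet_H0[OF i(1,2)] xs(1,2)] by simp
qed

lemma Mb_prod:
  assumes k: "k \<ge> 2"
  shows "int k + 1 - int (Suc (Suc m')) * (int k + 1) \<le> e \<Longrightarrow> e \<le> int (Suc (Suc m')) * (int k - 1) - int k - 1 \<Longrightarrow>
   \<exists>xs. length xs = Suc (Suc m') \<and> set xs \<subseteq> H0_omega_pow k 1 \<and> tprod xs = Mb e"
proof (induction m' arbitrary: e)
  case 0
  have r: "-int k - 1 \<le> e" "e \<le> int k - 3" using 0 by (simp_all add: algebra_simps)
  define a where "a = (if e \<ge> -2 then 0 else -2 - e)"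
  define b where "b = (if e \<ge> -2 then e + 2 else 0)"
  have ab: "0 \<le> a" "a \<le> int k - 1" "0 \<le> b" "b \<le> int k - 1" "-2 - a + b = e"
    using r unfolding a_def b_def by auto
  have s1: "\<exists>ys. length ys = Suc 0 \<and> set ys \<subseteq> H0_omega_pow k 1 \<and> tprod ys = bet b"
    by (rule cons_prod[OF bet_H0[OF ab(3,4)], of "[]"]) (simp_all add: tprod_Nil tm_bet1)
  then obtain ys where ys: "length ys = Suc 0" "set ys \<subseteq> H0_omega_pow k 1" "tprod ys = bet b" by blast
  have "tmul (alp a) (tprod ys) = Mb e"
    unfolding ys(3) using ab(5) by (simp add: alp_def bet_def Mb_def tmul_simp lmul_dl_dl)
  then show ?case using cons_prod[OF alp_H0[OF ab(1,2)] ys(1,2)] by simp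
next
  case (Suc m')
  define L where "L = int k + 1 - int (Suc (Suc m')) * (int k + 1)"
  define U where "U = int (Suc (Suc m')) * (int k - 1) - int k - 1"
  have eL: "L - (int k + 1) \<le> e" using Suc.prems unfolding L_def by (simp add: algebra_simps)
  have eU: "e \<le> U + int k - 1" using Suc.prems unfolding U_def by (simp add: algebra_simps)
  have LU: "L + 1 \<le> U"
  proof -
    have "U - L = 2 * int k - 2 + 2 * (int m' * int k)" unfolding L_def U_def by (simp add: algebra_simps)
    moreover have "int m' * int k \<ge> 0" by simp
    ultimately show ?thesis using k by linarith
  qed
  have IH: "L \<le> e' \<Longrightarrow> e' \<le> U \<Longrightarrow> \<exists>xs. length xs = Suc (Suc m') \<and> set xs \<subseteq> H0_omega_pow k 1 \<and> tprod xs = Mb e'" for e'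
    using Suc.IH unfolding L_def U_def by blast
  show ?case
  proof (cases "e \<ge> L")
    case True
    define c where "c = max 0 (e - U)"
    have c: "0 \<le> c" "c \<le> int k - 1" "L \<le> e - c" "e - c \<le> U" using True eU LU k unfolding c_def by auto
    obtain xs where xs: "length xs = Suc (Suc m')" "set xs \<subseteq> H0_omega_pow k 1" "tprod xs = Mb (e - c)"
      using IH[OF c(3,4)] by blast
    have "tmul (bet c) (tprod xs) = Mb e" unfolding xs(3) Mb_def tm_betM by simp
    then show ?thesis using cons_prod[OF bet_H0[OF c(1,2)] xs(1,2)] by simp
  next
    case False
    define i where "i = max 0 (L - e - 2)"
    have c: "0 \<le> i" "i \<le> int k - 1" "L \<le> e + 2 + i" "e + 2 + i \<le> U" using False eL LU k unfolding i_def by auto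
    obtain xs where xs: "length xs = Suc (Suc m')" "set xs \<subseteq> H0_omega_pow k 1" "tprod xs = Mb (e + 2 + i)"
      using IH[OF c(3,4)] by blast
    have "tmul (alp i) (tprod xs) = Mb e" unfolding xs(3) Mb_def tm_alpM by simp
    then show ?thesis using cons_prod[OF alp_H0[OF c(1,2)] xs(1,2)] by simp
  qed
qed

lemma sum_fun_apply: "(\<Sum>i\<in>I. f i) (x::'a) = (\<Sum>i\<in>I. (f i x :: 'b::comm_monoid_add))"
  by (induction I rule: infinite_finite_induct) auto

lemma H0_nec:
  assumes "(h0, h1, h2) \<in> H0_omega_pow k m"
  defines "D \<equiv> int m * (int k + 1)"
  shows "\<forall>n. (n < 0 \<or> n > D - 2 * int m) \<longrightarrow> h0 n = 0"
    and "\<forall>n. (n < - D \<or> n > - 2 * int m) \<longrightarrow> h2 n = 0"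
    and "\<forall>n. (n < - D \<or> n > D - 2 * int m) \<longrightarrow> h1 n = 0"
    and "\<forall>n. - D \<le> n \<and> n \<le> int k - D \<longrightarrow> h1 n = h0 (- 2 * int m - n)"
    and "\<forall>n. - D \<le> n \<and> n \<le> int k - D \<longrightarrow> h1 (- 2 * int m - n) = h2 n"
proof -
  have H: "\<forall>n<0. h0 n = 0" "\<forall>n<0. at_inf m h2 n = 0"
    "(at_inf m h0, h1) \<in> sing_omega_pow k m" "(at_inf m h1, h2) \<in> sing_omega_pow k m"
    using assms(1) unfolding H0_omega_pow_def by auto
  have C1: "Cp k D ((-1)^m) (at_inf m h0, h1)" and C2: "Cp k D ((-1)^m) (at_inf m h1, h2)"
    using omega_pow_Cp[OF H(3)] omega_pow_Cp[OF H(4)] unfolding D_def by auto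
  have a1: "\<And>n. n < -D \<Longrightarrow> h0 (- n - 2 * int m) = 0 \<and> h1 n = 0"
    using C1 unfolding Cp_def at_inf_def by auto
  have a2: "\<And>n. n < -D \<Longrightarrow> h1 (- n - 2 * int m) = 0 \<and> h2 n = 0"
    using C2 unfolding Cp_def at_inf_def by auto
  have w1: "\<And>n. n \<le> int k - D \<Longrightarrow> h0 (- n - 2 * int m) = h1 n"
    using C1 unfolding Cp_def at_inf_def by auto
  have w2: "\<And>n. n \<le> int k - D \<Longrightarrow> h1 (- n - 2 * int m) = h2 n"
    using C2 unfolding Cp_def at_inf_def by auto
  show "\<forall>n. (n < 0 \<or> n > D - 2 * int m) \<longrightarrow> h0 n = 0"
  proof (intro allI impI)
    fix n assume "n < 0 \<or> n > D - 2 * int m"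
    then show "h0 n = 0"
    proof
      assume "n > D - 2 * int m"
      then show ?thesis using a1[of "- n - 2 * int m"] by simp
    qed (use H in auto)
  qed
  show "\<forall>n. (n < - D \<or> n > - 2 * int m) \<longrightarrow> h2 n = 0"
  proof (intro allI impI)
    fix n assume "n < - D \<or> n > - 2 * int m"
    then show "h2 n = 0"
    proof
      assume "n > - 2 * int m"
      then show ?thesis using H(2) unfolding at_inf_def by (auto elim!: allE[of _ "- n - 2 * int m"])
    qed (use a2 in auto)
  qed
  show "\<forall>n. (n < - D \<or> n > D - 2 * int m) \<longrightarrow> h1 n = 0"
  proof (intro allI impI)
    fix n assume "n < - D \<or> n > D - 2 * int m"
    then show "h1 n = 0"
    proof
      assume "n > D - 2 * int m"
      then show ?thesis using a2[of "- n - 2 * int m"] by simp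
    qed (use a1 in auto)
  qed
  show "\<forall>n. - D \<le> n \<and> n \<le> int k - D \<longrightarrow> h1 n = h0 (- 2 * int m - n)"
  proof (intro allI impI)
    fix n assume "- D \<le> n \<and> n \<le> int k - D"
    then have "h0 (- n - 2 * int m) = h1 n" using w1 by auto
    moreover have "- n - 2 * int m = - 2 * int m - n" by simp
    ultimately show "h1 n = h0 (- 2 * int m - n)" by metis
  qed
  show "\<forall>n. - D \<le> n \<and> n \<le> int k - D \<longrightarrow> h1 (- 2 * int m - n) = h2 n"
  proof (intro allI impI)
    fix n assume "- D \<le> n \<and> n \<le> int k - D"
    then have "h1 (- n - 2 * int m) = h2 n" using w2 by auto
    moreover have "- n - 2 * int m = - 2 * int m - n" by simp
    ultimately show "h1 (- 2 * int m - n) = h2 n" by metis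
  qed
qed


definition I0 :: "nat \<Rightarrow> nat \<Rightarrow> int set" where "I0 k m = {0 .. int m * (int k - 1)}"
definition IM :: "nat \<Rightarrow> nat \<Rightarrow> int set" where
  "IM k m = {int k + 1 - int m * (int k + 1) .. int m * (int k - 1) - int k - 1}"
definition Bset :: "nat \<Rightarrow> nat \<Rightarrow> (lpoly \<times> lpoly \<times> lpoly) set" where
  "Bset k m = Ab m ` I0 k m \<union> Cb m ` I0 k m \<union> Mb ` IM k m"

lemma tscale_simp: "tscale c (a, b, d) = ((\<lambda>n. c * a n), (\<lambda>n. c * b n), (\<lambda>n. c * d n))"
  unfolding tscale_def by simp

lemma sum_if_eq: "finite S \<Longrightarrow> (\<Sum>n\<in>S. if n = a then f n else 0) = (if a \<in> S then f a else (0::complex))"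
  by simp

lemma H0_span:
  assumes k: "k \<ge> 2" and m: "m \<ge> 2" and h: "h \<in> H0_omega_pow k m"
  shows "h \<in> tv.span (Bset k m)"
proof -
  obtain h0 h1 h2 where he: "h = (h0, h1, h2)" by (cases h) auto
  define D where "D = int m * (int k + 1)"
  define N where "N = int m * (int k - 1)"
  have DN: "D - 2 * int m = N" unfolding D_def N_def by (simp add: algebra_simps)
  have hh: "(h0, h1, h2) \<in> H0_omega_pow k m" using h he by simp
  note nec = H0_nec[OF hh, folded D_def, unfolded DN]
  have I0e: "I0 k m = {0..N}" unfolding I0_def N_def by simp
  have IMe: "IM k m = {int k + 1 - D .. N - int k - 1}" unfolding IM_def N_def D_def by simp
  have mk: "(int m - 1) * (int k - 1) \<ge> 1" using mult_mono[of 1 "int m - 1" 1 "int k - 1"] k m by simp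
  have mke: "(int m - 1) * (int k - 1) = int m * int k - int m - int k + 1" by (simp add: algebra_simps)
  have De: "D = int m * int k + int m" "N = int m * int k - int m" unfolding D_def N_def by (simp_all add: algebra_simps)
  have Dk: "D - int k > 0" "N - int k \<ge> 0" using mk mke De m by linarith+
  define c where "c e = h1 e - h0 (- 2 * int m - e) - h2 (- 2 * int m - e)" for e
  define S where "S = (\<Sum>n\<in>I0 k m. tscale (h0 n) (Ab m n)) + (\<Sum>n\<in>I0 k m. tscale (h2 (- 2 * int m - n)) (Cb m n))
      + (\<Sum>e\<in>IM k m. tscale (c e) (Mb e))"
  have Sspan: "S \<in> tv.span (Bset k m)"
    unfolding S_def Bset_def
    by (intro tv.span_add tv.span_sum tv.span_scale tv.span_base) auto
  have fin: "finite (I0 k m)" "finite (IM k m)" unfolding I0_def IM_def by auto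
  have c0: "fst S x = h0 x" for x
  proof -
    have "fst S x = (\<Sum>n\<in>I0 k m. if n = x then h0 n else 0)"
      unfolding S_def by (simp add: fst_sum sum_fun_apply tscale_simp Ab_def Cb_def Mb_def dl_def
          if_distrib cong: if_cong) (intro sum.cong, auto)
    also have "\<dots> = h0 x" using fin nec(1) unfolding I0e by auto
    finally show ?thesis .
  qed
  have c2: "snd (snd S) x = h2 x" for x
  proof -
    have "snd (snd S) x = (\<Sum>n\<in>I0 k m. if n = - 2 * int m - x then h2 (- 2 * int m - n) else 0)"
      unfolding S_def by (simp add: snd_sum sum_fun_apply tscale_simp Ab_def Cb_def Mb_def dl_def)
        (intro sum.cong, auto)
    also have "\<dots> = h2 x" using fin nec(2) unfolding I0e DN[symmetric] by auto
    finally show ?thesis .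
  qed
  have c1: "fst (snd S) x = h1 x" for x
  proof -
    have "fst (snd S) x = (\<Sum>n\<in>I0 k m. if n = - 2 * int m - x then h0 n else 0)
        + (\<Sum>n\<in>I0 k m. if n = x then h2 (- 2 * int m - n) else 0) + (\<Sum>n\<in>IM k m. if n = x then c n else 0)"
      unfolding S_def
      by (simp add: snd_sum fst_sum sum_fun_apply tscale_simp Ab_def Cb_def Mb_def dl_def)
        (intro arg_cong2[where f="(+)"] sum.cong, auto)
    also have "\<dots> = (if - 2 * int m - x \<in> I0 k m then h0 (- 2 * int m - x) else 0)
        + (if x \<in> I0 k m then h2 (- 2 * int m - x) else 0) + (if x \<in> IM k m then c x else 0)"
      using fin by simp
    also have "\<dots> = h0 (- 2 * int m - x) + h2 (- 2 * int m - x) + (if x \<in> IM k m then c x else 0)"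
    proof -
      have q0: "(if - 2 * int m - x \<in> I0 k m then h0 (- 2 * int m - x) else 0) = h0 (- 2 * int m - x)"
        using nec(1) unfolding I0e by auto
      have q2: "(if x \<in> I0 k m then h2 (- 2 * int m - x) else 0) = h2 (- 2 * int m - x)"
        using nec(2) unfolding I0e DN[symmetric] by auto
      show ?thesis using q0 q2 by simp
    qed
    also have "\<dots> = h1 x"
    proof (cases "x \<in> IM k m")
      case True
      then show ?thesis unfolding c_def by simp
    next
      case False
      then have "x < - D \<or> (- D \<le> x \<and> x \<le> int k - D) \<or> (N - int k \<le> x \<and> x \<le> N) \<or> x > N"
        unfolding IMe by auto
      then show ?thesis
      proof (elim disjE)
        assume "x < - D" then show ?thesis using nec(1,2,3) False Dk unfolding DN[symmetric] by auto
      next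
        assume a: "- D \<le> x \<and> x \<le> int k - D"
        then show ?thesis using nec(2,4) Dk False unfolding DN[symmetric] by auto
      next
        assume a: "N - int k \<le> x \<and> x \<le> N"
        have "h1 x = h2 (- 2 * int m - x)"
          using nec(5)[rule_format, of "- 2 * int m - x"] a unfolding DN[symmetric] by auto
        then show ?thesis using a nec(1) Dk False unfolding DN[symmetric] by auto
      next
        assume "x > N" then show ?thesis using nec(1,2,3) False Dk unfolding DN[symmetric] by auto
      qed
    qed
    finally show ?thesis .
  qed
  have "h = S" unfolding he using c0 c1 c2
    by (cases S) (auto simp: fun_eq_iff)
  then show ?thesis using Sspan by simp
qed


lemma dl_apply: "dl a x = (if x = a then 1 else 0)" unfolding dl_def by simp

lemma B_indep:
  "tv.independent (Bset k m)"
proof -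
  have main: "u v = 0" if fin: "finite t" and sub: "t \<subseteq> Bset k m"
     and sum0: "(\<Sum>v\<in>t. tscale (u v) v) = 0" and vt: "v \<in> t" for t u v
  proof -
    let ?T = "\<Sum>v\<in>t. tscale (u v) v"
    have comp: "(\<Sum>w\<in>t. u w * fst w x) = 0" "(\<Sum>w\<in>t. u w * fst (snd w) x) = 0"
       "(\<Sum>w\<in>t. u w * snd (snd w) x) = 0" for x
    proof -
      have "fst ?T x = (\<Sum>w\<in>t. u w * fst w x)" "fst (snd ?T) x = (\<Sum>w\<in>t. u w * fst (snd w) x)"
        "snd (snd ?T) x = (\<Sum>w\<in>t. u w * snd (snd w) x)"
        by (simp_all add: fst_sum snd_sum sum_fun_apply tscale_def split_beta)
      then show "(\<Sum>w\<in>t. u w * fst w x) = 0" "(\<Sum>w\<in>t. u w * fst (snd w) x) = 0"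
       "(\<Sum>w\<in>t. u w * snd (snd w) x) = 0" using sum0 by (simp_all add: zero_prod_def)
    qed
    have uA: "u (Ab m n) = 0" if "Ab m n \<in> t" for n
    proof -
      have "(\<Sum>w\<in>t. u w * fst w n) = (\<Sum>w\<in>t. if w = Ab m n then u w else 0)"
      proof (intro sum.cong refl)
        fix w assume "w \<in> t"
        then have "w \<in> Bset k m" using sub by auto
        then show "u w * fst w n = (if w = Ab m n then u w else 0)"
          unfolding Bset_def by (auto simp: Ab_def Cb_def Mb_def dl_apply dl_nz dl_nz[symmetric] dl_inj split: if_splits)
      qed
      then show ?thesis using comp(1)[of n] fin that by simp
    qed
    have uC: "u (Cb m n) = 0" if "Cb m n \<in> t" for n
    proof -
      have "(\<Sum>w\<in>t. u w * snd (snd w) (- 2 * int m - n)) = (\<Sum>w\<in>t. if w = Cb m n then u w else 0)"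
      proof (intro sum.cong refl)
        fix w assume "w \<in> t"
        then have "w \<in> Bset k m" using sub by auto
        then show "u w * snd (snd w) (- 2 * int m - n) = (if w = Cb m n then u w else 0)"
          unfolding Bset_def by (auto simp: Ab_def Cb_def Mb_def dl_apply dl_nz dl_nz[symmetric] dl_inj split: if_splits)
      qed
      then show ?thesis using comp(3)[of "- 2 * int m - n"] fin that by simp
    qed
    have uM: "u (Mb e) = 0" if "Mb e \<in> t" for e
    proof -
      have "(\<Sum>w\<in>t. u w * fst (snd w) e) = (\<Sum>w\<in>t. if w = Mb e then u w else 0)"
      proof (intro sum.cong refl)
        fix w assume wt: "w \<in> t"
        then have "w \<in> Bset k m" using sub by auto
        then show "u w * fst (snd w) e = (if w = Mb e then u w else 0)"
          unfolding Bset_def using uA uC wt by (auto simp: Ab_def Cb_def Mb_def dl_apply dl_nz dl_nz[symmetric] dl_inj split: if_splits)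
      qed
      then show ?thesis using comp(2)[of e] fin that by simp
    qed
    show ?thesis using vt sub uA uC uM unfolding Bset_def by auto
  qed
  show ?thesis unfolding tv.independent_explicit_module using main by blast
qed

lemma B_card:
  assumes k: "k \<ge> 2" and m: "m \<ge> 2"
  shows "card (Bset k m) = (2 * m - 1) * (2 * k - 1)"
proof -
  have injA: "inj_on (Ab m) X" "inj_on (Cb m) X" "inj_on Mb X" for X
    by (auto simp: inj_on_def Ab_def Cb_def Mb_def dl_inj)
  have fin: "finite (I0 k m)" "finite (IM k m)" unfolding I0_def IM_def by auto
  have d1: "(Ab m ` I0 k m) \<inter> (Cb m ` I0 k m) = {}"
    by (auto simp: Ab_def Cb_def dl_nz dl_nz[symmetric])
  have d2: "(Ab m ` I0 k m \<union> Cb m ` I0 k m) \<inter> (Mb ` IM k m) = {}"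
    by (auto simp: Ab_def Cb_def Mb_def dl_nz dl_nz[symmetric])
  have "card (Bset k m) = card (I0 k m) + card (I0 k m) + card (IM k m)"
    unfolding Bset_def
    by (subst card_Un_disjoint[OF _ _ d2], simp_all add: fin)
       (subst card_Un_disjoint[OF _ _ d1], simp_all add: fin card_image injA)
  also have "\<dots> = nat (int m * (int k - 1) + 1) + nat (int m * (int k - 1) + 1)
       + nat (int m * (int k - 1) - int k - 1 - (int k + 1 - int m * (int k + 1)) + 1)"
    unfolding I0_def IM_def by simp
  also have "\<dots> = (2 * m - 1) * (2 * k - 1)"
  proof -
    define P where "P = int m * int k"
    have P2: "P \<ge> 2 * int k" unfolding P_def using m mult_right_mono[of 2 "int m" "int k"] by simp
    have e1: "int m * (int k - 1) = P - int m" "int m * (int k + 1) = P + int m"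
      unfolding P_def by (simp_all add: algebra_simps)
    have Pm: "P \<ge> 2 * int m" unfolding P_def using k mult_left_mono[of 2 "int k" "int m"] by simp
    have r: "int ((2 * m - 1) * (2 * k - 1)) = 4 * P - 2 * int m - 2 * int k + 1"
    proof -
      have a: "int (2 * m - 1) = 2 * int m - 1" using m by arith
      have b: "int (2 * k - 1) = 2 * int k - 1" using k by arith
      show ?thesis unfolding of_nat_mult a b P_def by (simp add: algebra_simps)
    qed
    have "int (nat (int m * (int k - 1) + 1) + nat (int m * (int k - 1) + 1)
       + nat (int m * (int k - 1) - int k - 1 - (int k + 1 - int m * (int k + 1)) + 1))
       = int ((2 * m - 1) * (2 * k - 1))"
      unfolding r e1 using P2 Pm k m by simp
    then show ?thesis by (simp only: of_nat_eq_iff)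
  qed
  finally show ?thesis .
qed


theorem lemma3p7:
  fixes k m :: nat
  assumes "k \<ge> 2" and "m \<ge> 2"
  shows "Vector_Spaces.vector_space tscale
         \<and> module.span tscale (mult_image k m) = H0_omega_pow k m
         \<and> vector_space.dim tscale (H0_omega_pow k m) = (2 * m - 1) * (2 * k - 1)"
proof -
  obtain m' where m': "m = Suc (Suc m')" using assms(2) by (metis add_2_eq_Suc le_Suc_ex)
  have BM: "Bset k m \<subseteq> mult_image k m"
  proof
    fix b assume "b \<in> Bset k m"
    then consider (A) n where "n \<in> I0 k m" "b = Ab m n" | (C) n where "n \<in> I0 k m" "b = Cb m n"
      | (M) e where "e \<in> IM k m" "b = Mb e"
      unfolding Bset_def by auto
    then show "b \<in> mult_image k m"
    proof cases
      case A
      then obtain xs where "length xs = Suc (Suc m')" "set xs \<subseteq> H0_omega_pow k 1" "tprod xs = Ab (Suc (Suc m')) n"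
        using Ab_prod[of n "Suc m'" k] unfolding I0_def m' by auto
      then show ?thesis unfolding mult_image_def m' A by (metis (mono_tags, lifting) mem_Collect_eq)
    next
      case C
      then obtain xs where "length xs = Suc (Suc m')" "set xs \<subseteq> H0_omega_pow k 1" "tprod xs = Cb (Suc (Suc m')) n"
        using Cb_prod[of n "Suc m'" k] unfolding I0_def m' by auto
      then show ?thesis unfolding mult_image_def m' C by (metis (mono_tags, lifting) mem_Collect_eq)
    next
      case M
      then obtain xs where "length xs = Suc (Suc m')" "set xs \<subseteq> H0_omega_pow k 1" "tprod xs = Mb e"
        using Mb_prod[OF assms(1), of m' e] unfolding IM_def m' by auto
      then show ?thesis unfolding mult_image_def m' M by (metis (mono_tags, lifting) mem_Collect_eq)
    qed
  qed
  have MH: "mult_image k m \<subseteq> H0_omega_pow k m" using mult_image_H0 by blast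
  have sub: "tv.subspace (H0_omega_pow k m)" by (rule H0_subspace)
  have HB: "H0_omega_pow k m \<subseteq> tv.span (Bset k m)" using H0_span[OF assms] by blast
  have span1: "tv.span (mult_image k m) = H0_omega_pow k m"
  proof
    show "tv.span (mult_image k m) \<subseteq> H0_omega_pow k m" by (rule tv.span_minimal[OF MH sub])
    show "H0_omega_pow k m \<subseteq> tv.span (mult_image k m)" using HB tv.span_mono[OF BM] by blast
  qed
  have spanB: "tv.span (Bset k m) = tv.span (H0_omega_pow k m)"
  proof -
    have "tv.span (Bset k m) \<subseteq> H0_omega_pow k m" using BM MH by (intro tv.span_minimal[OF _ sub]) auto
    then have "tv.span (Bset k m) = H0_omega_pow k m" using HB by blast
    moreover have "tv.span (H0_omega_pow k m) = H0_omega_pow k m" using sub by (rule tv.span_eq_iff[THEN iffD2])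
    ultimately show ?thesis by metis
  qed
  have "tv.dim (H0_omega_pow k m) = card (Bset k m)"
    by (rule tv.dim_eq_card[OF spanB B_indep])
  then show ?thesis using vs_tscale span1 B_card[OF assms] by simp
qed

end
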